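(* Let $(J,\mu)$ be a standard Borel space with a finite Borel measure $\mu$, and let $\mathcal{I}$ be a family of Borel subsets of $J$ satisfying: (I0) $\mathcal{I}$ is closed under taking (Borel) subsets; (I1) if $I_1\subseteq I_2\subseteq\cdots$ with $I_n\in\mathcal{I}$ for all $n$, then $\bigcup_n I_n\in\mathcal{I}$; (I2) for all $I_1,I_2\in\mathcal{I}$ with $\mu(I_1)<\mu(I_2)$ there exists $I_3\in\mathcal{I}$ with $I_1\subseteq I_3\subseteq I_1\cup I_2$ and $\mu(I_3)>\mu(I_1)$. Define $r(A)=\sup\{\mu(I): I\in\mathcal{I},\ I\subseteq A\}$ for Borel $A\subseteq J$. Then $r$ is submodular: $r(A)+r(B)\ge r(A\cap B)+r(A\cup B)$ for all Borel $A,B\subseteq J$. *)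

theory Defs
  imports "HOL-Analysis.Analysis"
begin

text \<open>Rank function of a family of independent sets: r(A) = sup of mu(I) over I in the family with I a subset of A.
  Values in ennreal so that the supremum over an empty family is 0.\<close>
definition rank_fn :: "'a measure \<Rightarrow> 'a set set \<Rightarrow> 'a set \<Rightarrow> ennreal" where
  "rank_fn M \<I> A = (SUP I \<in> {I \<in> \<I>. I \<subseteq> A}. emeasure M I)"

end

theory Submission
  imports Defs
begin

lemma key_ext:
  fixes M :: "'a measure" and \<I> :: "'a set set"
  assumes fin: "finite_measure M"
    and Isets: "\<I> \<subseteq> sets M"
    and I1: "\<And>F. incseq F \<Longrightarrow> (\<And>n. F n \<in> \<I>) \<Longrightarrow> (\<Union>n. F n) \<in> \<I>"
    and I2: "\<And>I1 I2. I1 \<in> \<I> \<Longrightarrow> I2 \<in> \<I> \<Longrightarrow> emeasure M I1 < emeasure M I2 \<Longrightarrow>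
               \<exists>I3 \<in> \<I>. I1 \<subseteq> I3 \<and> I3 \<subseteq> I1 \<union> I2 \<and> emeasure M I3 > emeasure M I1"
    and I: "I \<in> \<I>" "I \<subseteq> A"
  shows "\<exists>J\<in>\<I>. I \<subseteq> J \<and> J \<subseteq> A \<and> emeasure M J = rank_fn M \<I> A"
proof -
  interpret finite_measure M by fact
  define S where "S X = {J \<in> \<I>. X \<subseteq> J \<and> J \<subseteq> A}" for X
  define s where "s X = Sup (measure M ` S X)" for X
  have bdd: "bdd_above (measure M ` S X)" for X
    using bounded_measure by (auto intro!: bdd_aboveI)
  have step: "\<exists>Y. Y \<in> S X \<and> measure M Y > s X - 1 / real (Suc n)" if "X \<in> S X" for X n
  proof -
    have "s X - 1 / real (Suc n) < s X" by simp
    then show ?thesis unfolding s_def using less_cSup_iff[OF _ bdd[of X]] that by blast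
  qed
  define F where "F = rec_nat I (\<lambda>n X. SOME Y. Y \<in> S X \<and> measure M Y > s X - 1 / real (Suc n))"
  have F0: "F 0 = I" by (simp add: F_def)
  have FS: "F (Suc n) = (SOME Y. Y \<in> S (F n) \<and> measure M Y > s (F n) - 1 / real (Suc n))" for n
    by (simp add: F_def)
  have FinS: "F n \<in> S (F n)" for n
  proof (induction n)
    case 0 then show ?case using I by (simp add: F0 S_def)
  next
    case (Suc n)
    from someI_ex[OF step[OF Suc]] have "F (Suc n) \<in> S (F n)" unfolding FS by blast
    then show ?case by (simp add: S_def)
  qed
  have Fprop: "F (Suc n) \<in> S (F n) \<and> measure M (F (Suc n)) > s (F n) - 1 / real (Suc n)" for n
    unfolding FS by (rule someI_ex[OF step[OF FinS]])
  have inc: "incseq F"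
    by (rule incseq_SucI) (use Fprop in \<open>auto simp: S_def\<close>)
  have FI: "F n \<in> \<I>" for n using FinS[of n] by (simp add: S_def)
  define J where "J = (\<Union>n. F n)"
  have JI: "J \<in> \<I>" unfolding J_def by (rule I1[OF inc FI])
  have JM: "J \<in> sets M" using JI Isets by auto
  have JA: "J \<subseteq> A" using FinS by (auto simp: J_def S_def)
  have IJ: "I \<subseteq> J" unfolding J_def using F0 by (metis UN_upper UNIV_I)
  have maxJ: "measure M K \<le> measure M J" if K: "K \<in> S J" for K
  proof (rule ccontr)
    assume "\<not> ?thesis"
    then have "0 < measure M K - measure M J" by simp
    then obtain n where n: "1 / real (Suc n) < measure M K - measure M J"
      using reals_Archimedean by (metis inverse_eq_divide)
    have "S J \<subseteq> S (F n)" unfolding S_def J_def by auto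
    then have "measure M K \<le> s (F n)" unfolding s_def using K
      by (intro cSup_upper bdd) auto
    also have "\<dots> < measure M (F (Suc n)) + 1 / real (Suc n)" using Fprop[of n] by simp
    also have "measure M (F (Suc n)) \<le> measure M J"
      by (rule finite_measure_mono[OF _ JM]) (auto simp: J_def)
    finally show False using n by simp
  qed
  have "emeasure M J = rank_fn M \<I> A"
  proof (rule antisym)
    show "emeasure M J \<le> rank_fn M \<I> A" unfolding rank_fn_def
      using JI JA by (intro SUP_upper) auto
    show "rank_fn M \<I> A \<le> emeasure M J" unfolding rank_fn_def
    proof (rule SUP_least)
      fix K assume "K \<in> {I \<in> \<I>. I \<subseteq> A}"
      then have K: "K \<in> \<I>" "K \<subseteq> A" by auto
      show "emeasure M K \<le> emeasure M J"
      proof (rule ccontr)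
        assume "\<not> ?thesis"
        then have "emeasure M J < emeasure M K" by simp
        from I2[OF JI K(1) this] obtain I3 where I3: "I3 \<in> \<I>" "J \<subseteq> I3" "I3 \<subseteq> J \<union> K"
          "emeasure M I3 > emeasure M J" by blast
        have "I3 \<in> S J" using I3 JA K by (auto simp: S_def)
        then have "measure M I3 \<le> measure M J" by (rule maxJ)
        moreover have "I3 \<in> sets M" using I3 Isets by auto
        ultimately show False using I3(4) JM by (simp add: emeasure_eq_measure ennreal_less_iff)
      qed
    qed
  qed
  then show ?thesis using JI IJ JA by blast
qed

theorem lemma4p11:
  fixes M :: "('a :: polish_space) measure" and \<I> :: "'a set set"
  assumes borel_M: "sets M = sets borel"
    and fin: "finite_measure M"
    and I_borel: "\<I> \<subseteq> sets borel"
    and I0: "\<And>I J. I \<in> \<I> \<Longrightarrow> J \<in> sets borel \<Longrightarrow> J \<subseteq> I \<Longrightarrow> J \<in> \<I>"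
    and I1: "\<And>F. incseq F \<Longrightarrow> (\<And>n. F n \<in> \<I>) \<Longrightarrow> (\<Union>n. F n) \<in> \<I>"
    and I2: "\<And>I1 I2. I1 \<in> \<I> \<Longrightarrow> I2 \<in> \<I> \<Longrightarrow> emeasure M I1 < emeasure M I2 \<Longrightarrow>
               \<exists>I3 \<in> \<I>. I1 \<subseteq> I3 \<and> I3 \<subseteq> I1 \<union> I2 \<and> emeasure M I3 > emeasure M I1"
    and A: "A \<in> sets borel" and B: "B \<in> sets borel"
  shows "rank_fn M \<I> A + rank_fn M \<I> B \<ge> rank_fn M \<I> (A \<inter> B) + rank_fn M \<I> (A \<union> B)"
proof (cases "\<I> = {}")
  case True
  then show ?thesis by (simp add: rank_fn_def)
next
  case False
  then obtain I0' where "I0' \<in> \<I>" by blast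
  then have E: "{} \<in> \<I>" using I0[of I0' "{}"] by simp
  have Isets: "\<I> \<subseteq> sets M" using I_borel borel_M by simp
  obtain I where I: "I \<in> \<I>" "I \<subseteq> A \<inter> B" "emeasure M I = rank_fn M \<I> (A \<inter> B)"
    using key_ext[OF fin Isets I1 I2 E, of "A \<inter> B"] by auto
  obtain J where J: "J \<in> \<I>" "I \<subseteq> J" "J \<subseteq> A \<union> B" "emeasure M J = rank_fn M \<I> (A \<union> B)"
    using key_ext[OF fin Isets I1 I2 I(1), of "A \<union> B"] I(2) by blast
  have JB: "J \<in> sets borel" using J I_borel by auto
  have JA_I: "J \<inter> A \<in> \<I>" using I0[OF J(1)] JB A by auto
  have JB_I: "J \<inter> B \<in> \<I>" using I0[OF J(1)] JB B by auto
  have JAM: "J \<inter> A \<in> sets M" and JBM: "J \<inter> B \<in> sets M" using JA_I JB_I Isets by auto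
  have rA: "emeasure M (J \<inter> A) \<le> rank_fn M \<I> A" unfolding rank_fn_def
    using JA_I by (intro SUP_upper) auto
  have rB: "emeasure M (J \<inter> B) \<le> rank_fn M \<I> B" unfolding rank_fn_def
    using JB_I by (intro SUP_upper) auto
  have eq: "emeasure M (J \<inter> A) + emeasure M (J \<inter> B) = emeasure M J + emeasure M (J \<inter> A \<inter> B)"
  proof -
    have "J \<inter> A \<union> J \<inter> B = J" using J(3) by auto
    moreover have "J \<inter> A \<inter> (J \<inter> B) = J \<inter> A \<inter> B" by auto
    ultimately show ?thesis using emeasure_Un_Int[OF JAM JBM] by simp
  qed
  have mono: "emeasure M I \<le> emeasure M (J \<inter> A \<inter> B)"
  proof -
    have "J \<inter> A \<inter> B = (J \<inter> A) \<inter> (J \<inter> B)" by auto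
    then have "J \<inter> A \<inter> B \<in> sets M" using sets.Int[OF JAM JBM] by simp
    then show ?thesis using J(2) I(2) by (intro emeasure_mono) auto
  qed
  have "rank_fn M \<I> (A \<inter> B) + rank_fn M \<I> (A \<union> B) = emeasure M J + emeasure M I"
    using I(3) J(4) by (simp add: add.commute)
  also have "\<dots> \<le> emeasure M J + emeasure M (J \<inter> A \<inter> B)" using mono by (intro add_left_mono)
  also have "\<dots> = emeasure M (J \<inter> A) + emeasure M (J \<inter> B)" using eq by simp
  also have "\<dots> \<le> rank_fn M \<I> A + rank_fn M \<I> B" using rA rB by (intro add_mono)
  finally show ?thesis .
qed

end
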